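(* Let $i\ge 3$ and $k\ge 3$ be integers, let $p$ be a nonnegative integer, and put $r=\lfloor (F_i-1)/F_k\rfloor$. If $r\ge p$, then $$n_p(F_i,F_{i+2},F_{i+k})=\tfrac12\bigl((F_i+2pF_k-1)F_{i+2}-F_i+1\bigr)-\tfrac12\bigl(2rF_i-(r+p+1)(r-p)F_k\bigr)F_{k-2}.$$
   Context: Fibonacci numbers: $F_0=0$, $F_1=1$, $F_n=F_{n-1}+F_{n-2}$. For positive integers $a_1,\dots,a_l$ with $\gcd(a_1,\dots,a_l)=1$ and an integer $n$, let $d(n;a_1,\dots,a_l)$ be the number of tuples $(x_1,\dots,x_l)$ of nonnegative integers with $a_1x_1+\dots+a_lx_l=n$. For a nonnegative integer $p$, the $p$-Sylvester number $n_p(a_1,\dots,a_l)$ is the number of nonnegative integers $n$ with $d(n;a_1,\dots,a_l)\le p$. *)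

theory Defs
  imports Main "HOL-Number_Theory.Fib"
begin

definition num_reps :: "nat \<Rightarrow> nat list \<Rightarrow> nat" where
  "num_reps n as = card {xs :: nat list. length xs = length as \<and>
      (\<Sum>j<length as. as ! j * xs ! j) = n}"

definition sylvester_p :: "nat \<Rightarrow> nat list \<Rightarrow> nat" where
  "sylvester_p p as = card {n :: nat. num_reps n as \<le> p}"

end

theory Submission
  imports Defs "HOL-Number_Theory.Cong"
begin


lemma fib_id: "fib (i + K + 2) + fib K * fib i = fib (K + 2) * fib (i + 2)"
proof (induction K rule: fib.induct)
  case 1 then show ?case by simp
next
  case 2 then show ?case by (simp add: fib_plus_2 numeral_3_eq_3)
next
  case (3 n)
  have e1: "fib (i + Suc (Suc n) + 2) = fib (i + n + 2) + fib (i + Suc n + 2)"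
  proof -
    have "i + Suc (Suc n) + 2 = Suc (Suc (i + n + 2))" by simp
    then show ?thesis by (simp only: fib.simps(3)) (simp add: algebra_simps)
  qed
  have e2: "fib (Suc (Suc n) + 2) = fib (n+2) + fib (Suc n + 2)"
    by (simp add: fib_plus_2)
  have e3: "fib (Suc (Suc n)) = fib n + fib (Suc n)" by simp
  show ?case using 3 e1 e2 e3 by (simp add: algebra_simps)
qed

lemma fib_coprime: "coprime (fib i) (fib (i+2))"
proof -
  have "gcd i (i+2) dvd 2"
    by (metis add_diff_cancel_left' dvd_diff_nat gcd_dvd1 gcd_dvd2)
  then have le: "gcd i (i+2) \<le> 2" by (simp add: dvd_imp_le)
  have "gcd i (i+2) > 0" by simp
  with le have "gcd i (i+2) = 1 \<or> gcd i (i+2) = 2" by linarith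
  then have "fib (gcd i (i+2)) = 1" by auto
  then show ?thesis by (metis fib_gcd coprime_iff_gcd_eq_1)
qed




locale frob =
  fixes a b c f g p :: nat
  assumes cfb: "c + g*a = f*b" and b2a: "2*a \<le> b" and f2g: "2*g \<le> f" and g1: "1 \<le> g"
    and a1: "1 \<le> a" and cop: "coprime a b" and pr: "p \<le> (a-1) div f"
begin

lemma fpos: "f > 0" using f2g g1 by linarith

lemma fb4: "int f * int b \<ge> 4 * int a * int g"
proof -
  have "(2*g)*(2*a) \<le> f*b" using f2g b2a by (rule mult_le_mono)
  then have "int ((2*g)*(2*a)) \<le> int (f*b)" by linarith
  then show ?thesis by (simp add: algebra_simps)
qed

lemma ineq:
  assumes "f*z \<le> t0 + a*m" "t0 < a" "1 \<le> m"
  shows "int f*(int b*(int m - 1) - int g*int z) > int a*int g*(3*int m - 5)"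
proof -
  have h1: "int f * int z < int a * (int m + 1)" using assms(1,2)
  proof -
    have "f*z < a*(m+1)" using assms(1,2) by (simp add: algebra_simps)
    then have "int (f*z) < int (a*(m+1))" by linarith
    then show ?thesis by (simp add: algebra_simps)
  qed
  have h2: "int g * (int f * int z) < int g * (int a * (int m + 1))"
    using h1 g1 by (intro mult_strict_left_mono) auto
  have h3: "int f * int b * (int m - 1) \<ge> 4 * int a * int g * (int m - 1)"
    using fb4 assms(3) by (intro mult_right_mono) auto
  have "int f*(int b*(int m - 1) - int g*int z) = int f * int b * (int m - 1) - int g * (int f * int z)"
    by (simp add: algebra_simps)
  also have "\<dots> > 4 * int a * int g * (int m - 1) - int g * (int a * (int m + 1))"
    using h2 h3 by linarith
  also have "4 * int a * int g * (int m - 1) - int g * (int a * (int m + 1)) = int a*int g*(3*int m - 5)"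
    by (simp add: algebra_simps)
  finally show ?thesis .
qed

lemma cor1:
  assumes "f*z \<le> t0 + a*m" "t0 < a" "1 \<le> m"
  shows "int b*int m - int g*int z > 0"
proof -
  have A: "int f*(int b*(int m - 1) - int g*int z) > int a*int g*(3*int m - 5)"
    using ineq[OF assms] .
  have "int a * int g * (3*int m - 5) + 4 * int a * int g \<ge> 0"
  proof -
    have "int a * int g * (3*int m - 5) + 4 * int a * int g = int a * int g * (3*int m - 1)"
      by (simp add: algebra_simps)
    moreover have "int a * int g \<ge> 0" by simp
    moreover have "3*int m - 1 \<ge> 0" using assms(3) by simp
    ultimately show ?thesis by simp
  qed
  then have "int f*(int b*int m - int g*int z) > 0"
    using A fb4 by (simp add: algebra_simps)
  then show ?thesis using fpos by (simp add: zero_less_mult_iff)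
qed

lemma cor2:
  assumes "f*z \<le> t0 + a*m" "t0 < a" "2 \<le> m"
  shows "int b*int m - int g*int z \<ge> int b"
proof -
  have A: "int f*(int b*(int m - 1) - int g*int z) > int a*int g*(3*int m - 5)"
    using ineq[OF assms(1,2)] assms(3) by simp
  have "int a*int g*(3*int m - 5) \<ge> 0" using assms(3) by simp
  then have "int f*(int b*(int m - 1) - int g*int z) > 0" using A by linarith
  then have "int b*(int m - 1) - int g*int z > 0" using fpos by (simp add: zero_less_mult_iff)
  then show ?thesis by (simp add: algebra_simps)
qed

end



context frob begin

definition P :: "nat \<Rightarrow> int \<Rightarrow> (nat \<times> nat) set" where
 "P t0 e = {(m,z). f*z \<le> t0 + a*m \<and> int b*int m \<le> e + int g*int z}"

definition E :: "nat \<Rightarrow> int" where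
 "E t = (if p*f \<le> t then int g*(int p - int(t div f))
         else int b - int g*(int((t+a) div f) - int p + int(t div f) + 1))"

lemma P_mem: "(m,z) \<in> P t0 e \<longleftrightarrow> f*z \<le> t0 + a*m \<and> int b*int m \<le> e + int g*int z"
  by (simp add: P_def)

lemma le_div: "z \<le> N div f \<longleftrightarrow> f*z \<le> N"
  using fpos by (simp add: less_eq_div_iff_mult_less_eq mult.commute)

lemma cor3:
  assumes "t0 < a"
  shows "int b > int g * int ((t0+a) div f)"
proof -
  have "f * ((t0+a) div f) \<le> t0 + a" using le_div by blast
  then have "int (f * ((t0+a) div f)) < int (2 * a)" using assms by linarith
  then have "int f * int ((t0+a) div f) < 2 * int a" by simp
  then have "int g * (int f * int ((t0+a) div f)) < int g * (2 * int a)"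
    using g1 by (intro mult_strict_left_mono) auto
  moreover have "int f * (int b - int g * int ((t0+a) div f)) = int f * int b - int g * (int f * int ((t0+a) div f))"
    by (simp add: algebra_simps)
  moreover have "int a * int g \<ge> 0" by simp
  moreover have "int g * (2 * int a) = 2*(int a * int g)" by simp
  ultimately have "int f * (int b - int g * int ((t0+a) div f)) > 0"
    using fb4 by linarith
  then show ?thesis using fpos by (simp add: zero_less_mult_iff)
qed

lemma q1p: "p \<le> (t0+a) div f"
  using pr div_le_mono[of "a-1" "t0+a" f] by linarith

lemma key:
  assumes t0a: "t0 < a" and fin: "finite (P t0 e)"
  shows "card (P t0 e) \<le> p \<longleftrightarrow> e < E t0"
proof -
  define q0 where "q0 = t0 div f"
  define q1 where "q1 = (t0+a) div f"
  have q1p: "p \<le> q1" unfolding q1_def by (rule q1p)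
  have q0f: "f*q0 \<le> t0" using le_div q0_def by blast
  have q1f: "f*q1 \<le> t0+a" using le_div q1_def by blast
  have bq1: "int b > int g * int q1" unfolding q1_def using cor3[OF t0a] .
  show ?thesis
  proof (cases "p*f \<le> t0")
    case True
    then have pq0: "p \<le> q0" unfolding q0_def using le_div by (simp add: mult.commute)
    have EA: "E t0 = int g*(int p - int q0)" using True by (simp add: E_def q0_def)
    show ?thesis
    proof (cases "e < E t0")
      case eE: True
      have sub: "P t0 e \<subseteq> {0} \<times> {q0+1-p..q0}"
      proof
        fix x assume x: "x \<in> P t0 e"
        obtain m z where xmz: "x = (m,z)" by fastforce
        have m1: "f*z \<le> t0 + a*m" and m2: "int b*int m \<le> e + int g*int z"
          using x xmz P_mem by auto
        have Eneg: "E t0 \<le> 0" using EA pq0 by (simp add: mult_nonneg_nonpos)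
        have m0: "m = 0"
        proof (rule ccontr)
          assume "m \<noteq> 0"
          then have "int b*int m - int g*int z > 0" using cor1[OF m1 t0a] by simp
          then show False using m2 eE Eneg by linarith
        qed
        have zq0: "z \<le> q0" using m1 m0 le_div q0_def by simp
        have "int g * int z > int g * (int q0 - int p)"
          using m2 m0 eE EA by (simp add: algebra_simps)
        then have "int z > int q0 - int p" using g1 by (simp add: mult_less_cancel_left)
        then show "x \<in> {0} \<times> {q0+1-p..q0}" using xmz m0 zq0 by auto
      qed
      have "card (P t0 e) \<le> card ({0::nat} \<times> {q0+1-p..q0})"
        by (rule card_mono[OF _ sub]) auto
      also have "\<dots> = p" using pq0 by (simp add: card_cartesian_product)
      finally show ?thesis using eE by simp
    next
      case eE: False
      have sub: "{0} \<times> {q0-p..q0} \<subseteq> P t0 e"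
      proof
        fix x assume "x \<in> {0::nat} \<times> {q0-p..q0}"
        then obtain z where xz: "x = (0,z)" and z1: "q0 - p \<le> z" and z2: "z \<le> q0" by auto
        have "f*z \<le> f*q0" using z2 by simp
        then have c1: "f*z \<le> t0" using q0f by linarith
        have "int z \<ge> int q0 - int p" using z1 by linarith
        then have "int g * int z \<ge> int g * (int q0 - int p)" using g1 by (intro mult_left_mono) auto
        then have c2: "0 \<le> e + int g * int z" using eE EA by (simp add: algebra_simps)
        show "x \<in> P t0 e" using xz c1 c2 P_mem by simp
      qed
      have "p + 1 = card ({0::nat} \<times> {q0-p..q0})" using pq0 by (simp add: card_cartesian_product)
      also have "\<dots> \<le> card (P t0 e)" by (rule card_mono[OF fin sub])
      finally show ?thesis using eE by simp
    qed
  next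
    case False
    have pq0: "q0 < p"
    proof (rule ccontr)
      assume "\<not> q0 < p"
      then have "f*p \<le> f*q0" by (intro mult_le_mono2) simp
      then have "f*p \<le> t0" using q0f by (rule le_trans)
      then have "p*f \<le> t0" by (simp add: mult.commute)
      then show False using False by simp
    qed
    have EB: "E t0 = int b - int g*(int q1 - int p + int q0 + 1)" using False
      by (simp add: E_def q0_def q1_def)
    show ?thesis
    proof (cases "e < E t0")
      case eE: True
      have sub: "P t0 e \<subseteq> {0} \<times> {..q0} \<union> {1} \<times> {q1+q0+2-p..q1}"
      proof
        fix x assume x: "x \<in> P t0 e"
        obtain m z where xmz: "x = (m,z)" by fastforce
        have m1: "f*z \<le> t0 + a*m" and m2: "int b*int m \<le> e + int g*int z"
          using x xmz P_mem by auto
        have Eb: "E t0 \<le> int b" using EB q1p by simp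
        have m01: "m \<le> 1"
        proof (rule ccontr)
          assume "\<not> m \<le> 1"
          then have "int b*int m - int g*int z \<ge> int b" using cor2[OF m1 t0a] by simp
          then show False using m2 eE Eb by linarith
        qed
        show "x \<in> {0} \<times> {..q0} \<union> {1} \<times> {q1+q0+2-p..q1}"
        proof (cases "m = 0")
          case True
          then have "z \<le> q0" using m1 le_div q0_def by simp
          then show ?thesis using xmz True by simp
        next
          case False
          then have m1': "m = 1" using m01 by simp
          then have zq1: "z \<le> q1" using m1 le_div q1_def by (simp add: add.commute)
          have "int g * int z > int g * (int q1 - int p + int q0 + 1)"
            using m2 m1' eE EB by (simp add: algebra_simps)
          then have "int z > int q1 - int p + int q0 + 1" using g1 by (simp add: mult_less_cancel_left)
          then show ?thesis using xmz m1' zq1 by auto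
        qed
      qed
      have "card (P t0 e) \<le> card ({0::nat} \<times> {..q0} \<union> {1} \<times> {q1+q0+2-p..q1})"
        by (rule card_mono[OF _ sub]) auto
      also have "\<dots> \<le> card ({0::nat} \<times> {..q0}) + card ({1::nat} \<times> {q1+q0+2-p..q1})"
        by (rule card_Un_le)
      also have "\<dots> = p" using pq0 q1p by (simp add: card_cartesian_product)
      finally show ?thesis using eE by simp
    next
      case eE: False
      have e0: "e \<ge> 0"
      proof -
        have "int g * (int q1 - int p + int q0 + 1) \<le> int g * int q1"
          using pq0 g1 by (intro mult_left_mono) auto
        then show ?thesis using eE EB bq1 by linarith
      qed
      have sub: "{0} \<times> {..q0} \<union> {1} \<times> {q1+q0+1-p..q1} \<subseteq> P t0 e"
      proof
        fix x assume "x \<in> {0::nat} \<times> {..q0} \<union> {1} \<times> {q1+q0+1-p..q1}"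
        then consider (A) z where "x = (0,z)" "z \<le> q0"
          | (B) z where "x = (1,z)" "q1+q0+1-p \<le> z" "z \<le> q1" by auto
        then show "x \<in> P t0 e"
        proof cases
          case A
          have "f*z \<le> f*q0" using A by simp
          then have "f*z \<le> t0" using q0f by linarith
          then show ?thesis using A e0 P_mem by simp
        next
          case B
          have "f*z \<le> f*q1" using B by simp
          then have c1: "f*z \<le> t0 + a*1" using q1f by linarith
          have "int z \<ge> int q1 - int p + int q0 + 1" using B q1p by linarith
          then have "int g * int z \<ge> int g * (int q1 - int p + int q0 + 1)"
            using g1 by (intro mult_left_mono) auto
          then have c2: "int b * int 1 \<le> e + int g * int z" using eE EB by (simp add: algebra_simps)
          show ?thesis using B c1 c2 P_mem by simp
        qed
      qed
      have "p + 1 = card ({0::nat} \<times> {..q0}) + card ({1::nat} \<times> {q1+q0+1-p..q1})"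
        using pq0 q1p by (simp add: card_cartesian_product)
      also have "\<dots> = card ({0::nat} \<times> {..q0} \<union> {1} \<times> {q1+q0+1-p..q1})"
        by (rule card_Un_disjoint[symmetric]) auto
      also have "\<dots> \<le> card (P t0 e)" by (rule card_mono[OF fin sub])
      finally show ?thesis using eE by simp
    qed
  qed
qed

end



lemma sum3: "(\<Sum>j<3. (h::nat\<Rightarrow>nat) j) = h 0 + h 1 + h 2"
  by (simp add: numeral_3_eq_3 numeral_2_eq_2)

lemma len3: "length xs = 3 \<Longrightarrow> xs = [xs!0, xs!1, xs!2]"
  by (cases xs; cases "tl xs"; cases "tl (tl xs)") (auto simp: numeral_3_eq_3)

lemma reps_set: "{xs :: nat list. length xs = length [a,b,c] \<and>
      (\<Sum>j<length [a,b,c]. [a,b,c] ! j * xs ! j) = n} = {[x,y,z] | x y z. a*x+b*y+c*z = n}"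
proof (intro set_eqI iffI)
  fix xs assume "xs \<in> {xs :: nat list. length xs = length [a,b,c] \<and>
      (\<Sum>j<length [a,b,c]. [a,b,c] ! j * xs ! j) = n}"
  then have l: "length xs = 3" and s: "a * xs!0 + b * xs!1 + c * xs!2 = n"
    by (auto simp: sum3 numeral_2_eq_2)
  then show "xs \<in> {[x,y,z] | x y z. a*x+b*y+c*z = n}" using len3[OF l] by blast
next
  fix xs assume "xs \<in> {[x,y,z] | x y z. a*x+b*y+c*z = n}"
  then show "xs \<in> {xs :: nat list. length xs = length [a,b,c] \<and>
      (\<Sum>j<length [a,b,c]. [a,b,c] ! j * xs ! j) = n}" by (auto simp: sum3 numeral_2_eq_2)
qed

context frob begin

lemma c1: "c \<ge> 1"
proof -
  have "int f * int b \<ge> 4 * (int a * int g)" using fb4 by simp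
  moreover have "int a * int g \<ge> 1"
  proof -
    have "1*1 \<le> a*g" by (rule mult_le_mono[OF a1 g1])
    then have "int 1 \<le> int (a*g)" by linarith
    then show ?thesis by simp
  qed
  moreover have "int c + int g * int a = int f * int b" using cfb by (metis of_nat_add of_nat_mult)
  ultimately show ?thesis by (simp add: algebra_simps)
qed

lemma reps:
  assumes t0a: "t0 < a" and n: "int n = int b*int t0 + int a*e"
  shows "num_reps n [a,b,c] = card (P t0 e) \<and> finite (P t0 e)"
proof -
  define R where "R = {[x,y,z] | x y z. a*x+b*y+c*z = n}"
  define h where "h = (\<lambda>(m::nat,z::nat). [nat(e + int g*int z - int b*int m), t0 + a*m - f*z, z])"
  have cfbi: "int c = int f * int b - int g * int a" using cfb by (metis add_diff_cancel_right' of_nat_add of_nat_mult)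
  have bij: "bij_betw h (P t0 e) R"
  proof (rule bij_betw_imageI)
    show "inj_on h (P t0 e)"
    proof (rule inj_onI)
      fix u v assume u: "u \<in> P t0 e" and v: "v \<in> P t0 e" and huv: "h u = h v"
      obtain m z where umz: "u = (m,z)" by fastforce
      obtain m' z' where vmz: "v = (m',z')" by fastforce
      have zz: "z = z'" using huv umz vmz by (simp add: h_def)
      have "t0 + a*m - f*z = t0 + a*m' - f*z'" using huv umz vmz unfolding h_def
        by (simp only: prod.case list.inject) blast
      moreover have "f*z \<le> t0 + a*m" "f*z' \<le> t0 + a*m'" using u v umz vmz P_mem by auto
      ultimately have "t0 + a*m - f*z = t0 + a*m' - f*z" "f*z \<le> t0 + a*m" "f*z \<le> t0 + a*m'"
        using zz by auto
      then have "a*m = a*m'" by linarith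
      then have "m = m'" using a1 by simp
      then show "u = v" using umz vmz zz by simp
    qed
  next
    show "h ` P t0 e = R"
    proof (intro set_eqI iffI)
      fix xs assume "xs \<in> h ` P t0 e"
      then obtain m z where mz: "(m,z) \<in> P t0 e" and xs: "xs = h (m,z)" by auto
      have A: "f*z \<le> t0 + a*m" and B: "int b*int m \<le> e + int g*int z" using mz P_mem by auto
      define x where "x = nat(e + int g*int z - int b*int m)"
      define y where "y = t0 + a*m - f*z"
      have xi: "int x = e + int g*int z - int b*int m" using B x_def by simp
      have yi: "int y = int t0 + int a*int m - int f*int z" using A y_def by (simp add: of_nat_diff)
      have "int (a*x + b*y + c*z) = int a * int x + int b * int y + int c * int z" by simp
      also have "\<dots> = int b*int t0 + int a*e" unfolding xi yi cfbi by (simp add: algebra_simps)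
      finally have "a*x+b*y+c*z = n" using n by linarith
      moreover have "xs = [x,y,z]" using xs by (simp add: h_def x_def y_def)
      ultimately show "xs \<in> R" unfolding R_def by blast
    next
      fix xs assume "xs \<in> R"
      then obtain x y z where xs: "xs = [x,y,z]" and s: "a*x+b*y+c*z = n" unfolding R_def by blast
      have si: "int a * int x + int b * int y + int c * int z = int b*int t0 + int a*e"
        using s n by (metis of_nat_add of_nat_mult)
      have key: "int b * (int y + int f * int z - int t0) = int a * (e + int g * int z - int x)"
        using si unfolding cfbi by (simp add: algebra_simps)
      have "int a dvd int b * (int y + int f * int z - int t0)" using key by simp
      moreover have "coprime (int a) (int b)" using cop by simp
      ultimately have "int a dvd (int y + int f * int z - int t0)"
        using coprime_dvd_mult_right_iff by blast
      then obtain k where k: "int y + int f * int z - int t0 = int a * k" by (elim dvdE)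
      have "int f * int z \<ge> 0" by simp
      then have "int a * k > - int a" using k t0a by linarith
      then have ak: "int a * k > - int a" .
      have k0: "k \<ge> 0"
      proof (rule ccontr)
        assume "\<not> k \<ge> 0" then have "k \<le> -1" by simp
        then have "int a * k \<le> int a * (-1)" by (intro mult_left_mono) auto
        then show False using ak by simp
      qed
      define m where "m = nat k"
      have mk: "int m = k" using k0 m_def by simp
      have "int b * (int a * k) = int a * (e + int g * int z - int x)" using key k by simp
      then have "int a * (int b * k) = int a * (e + int g * int z - int x)" by (simp add: algebra_simps)
      then have bk: "int b * k = e + int g * int z - int x" using a1 by simp
      have c1': "f*z \<le> t0 + a*m"
      proof -
        have "int (f*z) \<le> int (t0 + a*m)" using k mk by simp
        then show ?thesis by linarith
      qed
      have c2: "int b*int m \<le> e + int g*int z" using bk mk by simp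
      have mzP: "(m,z) \<in> P t0 e" using c1' c2 P_mem by simp
      have "nat(e + int g*int z - int b*int m) = x" using bk mk by simp
      moreover have "t0 + a*m - f*z = y"
      proof -
        have "int (t0 + a*m - f*z) = int y" using c1' k mk by (simp add: of_nat_diff)
        then show ?thesis by linarith
      qed
      ultimately have "h (m,z) = xs" using xs by (simp add: h_def)
      then show "xs \<in> h ` P t0 e" using mzP by force
    qed
  qed
  have finR: "finite R"
  proof -
    have "R \<subseteq> {xs. set xs \<subseteq> {..n} \<and> length xs = 3}"
    proof
      fix xs assume "xs \<in> R"
      then obtain x y z where xs: "xs = [x,y,z]" and s: "a*x+b*y+c*z = n" unfolding R_def by blast
      have "x \<le> a*x" "y \<le> b*y" "z \<le> c*z" using a1 c1 b2a by auto
      then have "x \<le> n" "y \<le> n" "z \<le> n" using s by linarith+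
      then show "xs \<in> {xs. set xs \<subseteq> {..n} \<and> length xs = 3}" using xs s by auto
    qed
    then show ?thesis by (rule finite_subset) (rule finite_lists_length_eq, simp)
  qed
  have "num_reps n [a,b,c] = card R" unfolding num_reps_def R_def reps_set ..
  also have "\<dots> = card (P t0 e)" using bij_betw_same_card[OF bij] by simp
  finally show ?thesis using bij_betw_finite[OF bij] finR by simp
qed

end



lemma blk: "s \<le> f \<Longrightarrow> (\<Sum>t\<in>{q*f..<q*f+s}. int (t div f)) = int q * int s"
proof -
  assume sf: "s \<le> f"
  have "\<And>t. t \<in> {q*f..<q*f+s} \<Longrightarrow> t div f = q"
  proof -
    fix t assume "t \<in> {q*f..<q*f+s}"
    then have "q*f \<le> t" "t < (Suc q)*f" using sf by auto
    then show "t div f = q" by (metis div_nat_eqI mult.commute)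
  qed
  then have "(\<Sum>t\<in>{q*f..<q*f+s}. int (t div f)) = (\<Sum>t\<in>{q*f..<q*f+s}. int q)"
    by (intro sum.cong) auto
  then show ?thesis by simp
qed

lemma G0: "2 * (\<Sum>t<q*f. int (t div f)) = int f * int q * (int q - 1)"
proof (induction q)
  case 0 then show ?case by simp
next
  case (Suc q)
  have "(\<Sum>t<Suc q*f. int (t div f)) = (\<Sum>t\<in>{0..<q*f}. int (t div f)) + (\<Sum>t\<in>{q*f..<q*f+f}. int (t div f))"
    by (simp add: sum.atLeastLessThan_concat lessThan_atLeast0 add.commute)
  also have "\<dots> = (\<Sum>t<q*f. int (t div f)) + int q * int f" by (simp add: blk lessThan_atLeast0)
  finally show ?case using Suc by (simp add: algebra_simps)
qed

lemma G: "s \<le> f \<Longrightarrow> 2 * (\<Sum>t<q*f+s. int (t div f)) = int f * int q * (int q - 1) + 2 * int q * int s"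
proof -
  assume sf: "s \<le> f"
  have "(\<Sum>t<q*f+s. int (t div f)) = (\<Sum>t\<in>{0..<q*f}. int (t div f)) + (\<Sum>t\<in>{q*f..<q*f+s}. int (t div f))"
    by (simp add: sum.atLeastLessThan_concat lessThan_atLeast0)
  also have "\<dots> = (\<Sum>t<q*f. int (t div f)) + int q * int s" by (simp add: blk[OF sf] lessThan_atLeast0)
  finally show ?thesis using G0[where q=q and f=f] by (simp add: algebra_simps)
qed

lemma gauss2: "2 * (\<Sum>t<n. int t) = int n * (int n - 1)"
  by (induction n) (auto simp: algebra_simps)




lemma lb:
  assumes "1 \<le> (a::nat)"
  shows "0 \<le> int x + int a * e \<longleftrightarrow> - int (x div a) \<le> e"
proof -
  have xd: "int x = int a * int (x div a) + int (x mod a)"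
    by (metis div_mult_mod_eq of_nat_add of_nat_mult mult.commute)
  have r: "int (x mod a) < int a" using assms by simp
  show ?thesis
  proof
    assume h: "0 \<le> int x + int a * e"
    show "- int (x div a) \<le> e"
    proof (rule ccontr)
      assume "\<not> - int (x div a) \<le> e"
      then have "int (x div a) + e \<le> -1" by simp
      then have "int a * (int (x div a) + e) \<le> int a * (-1)" by (intro mult_left_mono) auto
      then show False using h xd r by (simp add: algebra_simps)
    qed
  next
    assume h: "- int (x div a) \<le> e"
    then have "0 \<le> int a * (int (x div a) + e)" by simp
    then show "0 \<le> int x + int a * e" using xd by (simp add: algebra_simps)
  qed
qed

context frob begin

lemma perm_inj: "inj_on (\<lambda>t. b*t mod a) {..<a}"
  proof (rule inj_onI)
    fix t t' assume t: "t \<in> {..<a}" and t': "t' \<in> {..<a}" and e: "b*t mod a = b*t' mod a"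
    have "[b*t = b*t'] (mod a)" using e by (simp add: cong_def)
    moreover have "coprime b a" using cop by (simp add: coprime_commute)
    ultimately have "[t = t'] (mod a)" using cong_mult_lcancel_nat by blast
    then show "t = t'" using t t' cong_less_modulus_unique_nat by auto
  qed

lemma perm: "(\<lambda>t. b*t mod a) ` {..<a} = {..<a}"
proof -
  note inj = perm_inj
  have sub: "(\<lambda>t. b*t mod a) ` {..<a} \<subseteq> {..<a}" using a1 by auto
  have "card ((\<lambda>t. b*t mod a) ` {..<a}) = card {..<a}" using card_image[OF inj] .
  then show ?thesis using sub by (simp add: card_subset_eq)
qed

lemma card_S:
  "card {n. num_reps n [a,b,c] \<le> p} = (\<Sum>t<a. nat (E t + int (b*t div a)))"
proof -
  define T where "T = Sigma {..<a} (\<lambda>t. {- int (b*t div a) ..< E t})"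
  define S where "S = {n. num_reps n [a,b,c] \<le> p}"
  define \<phi> where "\<phi> = (\<lambda>(t::nat,e::int). nat (int b * int t + int a * e))"
  have memT: "(t,e) \<in> T \<longleftrightarrow> t < a \<and> 0 \<le> int b * int t + int a * e \<and> e < E t" for t e
  proof -
    have "0 \<le> int (b*t) + int a * e \<longleftrightarrow> - int (b*t div a) \<le> e" by (rule lb[OF a1])
    then show ?thesis by (auto simp: T_def)
  qed
  have bij: "bij_betw \<phi> T S"
  proof (rule bij_betw_imageI)
    show "inj_on \<phi> T"
    proof (rule inj_onI)
      fix u v assume u: "u \<in> T" and v: "v \<in> T" and huv: "\<phi> u = \<phi> v"
      obtain t e where ute: "u = (t,e)" by fastforce
      obtain t' e' where vte: "v = (t',e')" by fastforce
      have A: "t < a" "0 \<le> int b * int t + int a * e" using u ute memT by auto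
      have B: "t' < a" "0 \<le> int b * int t' + int a * e'" using v vte memT by auto
      have eq: "int b * int t + int a * e = int b * int t' + int a * e'"
        using huv ute vte A B by (simp add: \<phi>_def)
      have "int (b*t) mod int a = int (b*t') mod int a"
      proof -
        have "(int b * int t + int a * e) mod int a = (int b * int t' + int a * e') mod int a"
          using eq by simp
        then show ?thesis by simp
      qed
      then have "int (b*t mod a) = int (b*t' mod a)" by (simp only: zmod_int)
      then have "b*t mod a = b*t' mod a" by (simp only: of_nat_eq_iff)
      then have tt: "t = t'" by (rule inj_onD[OF perm_inj]) (use A B in auto)
      then have "int a * e = int a * e'" using eq by simp
      then have "e = e'" using a1 by simp
      then show "u = v" using ute vte tt by simp
    qed
  next
    show "\<phi> ` T = S"
    proof (intro set_eqI iffI)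
      fix n assume "n \<in> \<phi> ` T"
      then obtain t e where te: "(t,e) \<in> T" and n: "n = \<phi> (t,e)" by auto
      have A: "t < a" "0 \<le> int b * int t + int a * e" "e < E t" using te memT by auto
      have ni: "int n = int b * int t + int a * e" using n A by (simp add: \<phi>_def)
      from reps[OF A(1) ni] key[OF A(1)] A(3) show "n \<in> S" by (simp add: S_def)
    next
      fix n assume nS: "n \<in> S"
      have "n mod a \<in> {..<a}" using a1 by simp
      then have "n mod a \<in> (\<lambda>t. b*t mod a) ` {..<a}" by (simp only: perm)
      then obtain t where t: "t < a" and tm: "n mod a = b*t mod a" by blast
      have "int (n mod a) = int (b*t mod a)" using tm by simp
      then have "int n mod int a = int (b*t) mod int a" by (simp only: zmod_int)
      then have "int a dvd int n - int (b*t)" by (simp only: mod_eq_dvd_iff)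
      then obtain e where e: "int n - int (b*t) = int a * e" by (elim dvdE)
      have ni: "int n = int b * int t + int a * e" using e by simp
      have "0 \<le> int b * int t + int a * e" using ni by linarith
      moreover have "e < E t" using reps[OF t ni] key[OF t] nS by (simp add: S_def)
      ultimately have "(t,e) \<in> T" using memT t by simp
      moreover have "\<phi> (t,e) = n" using ni by (simp add: \<phi>_def)
      ultimately show "n \<in> \<phi> ` T" by force
    qed
  qed
  have "card S = card T" using bij_betw_same_card[OF bij] by simp
  also have "card T = (\<Sum>t<a. card {- int (b*t div a) ..< E t})"
    unfolding T_def by (rule card_SigmaI) auto
  also have "\<dots> = (\<Sum>t<a. nat (E t + int (b*t div a)))" by simp
  finally show ?thesis by (simp add: S_def)
qed

end



context frob begin

lemma Enonneg:
  assumes t: "t < a" shows "0 \<le> E t + int (b*t div a)"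
proof (cases "p*f \<le> t")
  case True
  have E: "E t = int g*(int p - int(t div f))" using True by (simp add: E_def)
  have "f * (t div f) \<le> t" using le_div by blast
  moreover have "g * (t div f) \<le> f * (t div f)" using f2g by simp
  moreover have "2*a*t \<le> b*t" using b2a by simp
  then have "2*t*a \<le> b*t" by (simp add: algebra_simps)
  then have "2*t \<le> b*t div a" using a1 by (simp add: less_eq_div_iff_mult_less_eq)
  ultimately have "g * (t div f) \<le> b*t div a" by linarith
  then have "int g * int (t div f) \<le> int (b*t div a)" by (metis of_nat_le_iff of_nat_mult)
  moreover have "0 \<le> int g * int p" by simp
  moreover have "E t = int g*int p - int g*int(t div f)" using E by (simp add: algebra_simps)
  ultimately show ?thesis by linarith
next
  case False
  have q0: "t div f < p"
  proof (rule ccontr)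
    assume "\<not> t div f < p"
    then have "f*p \<le> f*(t div f)" by (intro mult_le_mono2) simp
    moreover have "f*(t div f) \<le> t" using le_div by blast
    ultimately have "f*p \<le> t" by (rule le_trans)
    then show False using False by (simp add: mult.commute)
  qed
  have E: "E t = int b - int g*(int((t+a) div f) - int p + int(t div f) + 1)"
    using False by (simp add: E_def)
  have "int g*(int((t+a) div f) - int p + int(t div f) + 1) \<le> int g * int((t+a) div f)"
    using q0 by (intro mult_left_mono) auto
  then show ?thesis using E cor3[OF t] by linarith
qed

lemma sum_div: "2 * (\<Sum>t<a. int (b*t div a)) = (int a - 1) * (int b - 1)"
proof -
  have "(\<Sum>t<a. int (b*t mod a)) = (\<Sum>t<a. int t)"
  proof -
    have "(\<Sum>t<a. int (b*t mod a)) = sum int ((\<lambda>t. b*t mod a) ` {..<a})"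
      using sum.reindex[OF perm_inj, of int] by (simp add: comp_def)
    then show ?thesis by (simp only: perm)
  qed
  moreover have "(\<Sum>t<a. int b * int t) = (\<Sum>t<a. int a * int (b*t div a) + int (b*t mod a))"
  proof (intro sum.cong refl)
    fix t
    have "b*t = a*(b*t div a) + b*t mod a" by simp
    then have "int (b*t) = int (a*(b*t div a) + b*t mod a)" by (rule arg_cong)
    then show "int b * int t = int a * int (b*t div a) + int (b*t mod a)"
      by (simp only: of_nat_add of_nat_mult)
  qed
  ultimately have "int b * (\<Sum>t<a. int t) = int a * (\<Sum>t<a. int (b*t div a)) + (\<Sum>t<a. int t)"
    by (simp add: sum_distrib_left sum.distrib)
  then have "int a * (2 * (\<Sum>t<a. int (b*t div a))) = (int b - 1) * (2 * (\<Sum>t<a. int t))"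
    by (simp add: algebra_simps)
  also have "\<dots> = int a * ((int a - 1) * (int b - 1))" unfolding gauss2 by (simp add: algebra_simps)
  finally show ?thesis using a1 by simp
qed

end



context frob begin

lemma sum_E:
  defines "r \<equiv> (a-1) div f"
  shows "2 * (\<Sum>t<a. E t) = 2*int p*int f*int b - 2*int g*int r*int a
           + int g*int f*(int r+int p+1)*(int r-int p)"
proof -
  define s where "s = a - r*f"
  have dm: "(a-1) div f * f + (a-1) mod f = a - 1" by (rule div_mult_mod_eq)
  have ml: "(a-1) mod f < f" by (rule mod_less_divisor[OF fpos])
  have rf: "r*f \<le> a - 1" unfolding r_def using dm by linarith
  have rf2: "a - 1 < r*f + f" unfolding r_def using dm ml by linarith
  have sf: "s \<le> f" "1 \<le> s" using rf rf2 a1 unfolding s_def by linarith+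
  have as: "a = r*f + s" using rf a1 unfolding s_def by linarith
  have pr': "p \<le> r" using pr unfolding r_def .
  have "p*f \<le> r*f" using pr' by (rule mult_le_mono1)
  then have pfa: "p*f \<le> a" using rf by linarith
  define X1 where "X1 = (\<Sum>t<p*f. int (t div f))"
  define X2 where "X2 = (\<Sum>t<p*f. int ((t+a) div f))"
  define X3 where "X3 = (\<Sum>t<a. int (t div f))"
  define X4 where "X4 = (\<Sum>t<a+p*f. int (t div f))"
  have e1: "2*X1 = int f * int p * (int p - 1)" unfolding X1_def by (rule G0)
  have e3: "2*X3 = int f * int r * (int r - 1) + 2 * int r * int s"
    unfolding X3_def using G[OF sf(1), of r] as by simp
  have e4: "2*X4 = int f * int (r+p) * (int (r+p) - 1) + 2 * int (r+p) * int s"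
  proof -
    have "a + p*f = (r+p)*f + s" using as by (simp add: algebra_simps)
    then show ?thesis unfolding X4_def using G[OF sf(1), of "r+p"] by simp
  qed
  have e24: "X4 = X3 + X2"
  proof -
    have "X4 = (\<Sum>t\<in>{0..<a}. int (t div f)) + (\<Sum>t\<in>{a..<a+p*f}. int (t div f))"
      unfolding X4_def by (simp add: sum.atLeastLessThan_concat lessThan_atLeast0)
    moreover have "(\<Sum>t\<in>{a..<a+p*f}. int (t div f)) = X2"
    proof -
      have "(\<Sum>t\<in>{0+a..<p*f+a}. int (t div f)) = (\<Sum>t\<in>{0..<p*f}. int ((t+a) div f))"
        by (rule sum.shift_bounds_nat_ivl)
      then show ?thesis unfolding X2_def by (simp add: lessThan_atLeast0 add.commute)
    qed
    ultimately show ?thesis unfolding X3_def by (simp add: lessThan_atLeast0)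
  qed
  have split: "(\<Sum>t<a. E t) = (\<Sum>t\<in>{0..<p*f}. E t) + (\<Sum>t\<in>{p*f..<a}. E t)"
    using pfa by (simp add: sum.atLeastLessThan_concat lessThan_atLeast0)
  have P1: "(\<Sum>t\<in>{0..<p*f}. E t) = int (p*f) * (int b + int g * int p - int g) - int g * X2 - int g * X1"
  proof -
    have "(\<Sum>t\<in>{0..<p*f}. E t) = (\<Sum>t\<in>{0..<p*f}. (int b + int g * int p - int g)
            - int g * int ((t+a) div f) - int g * int (t div f))"
      by (intro sum.cong) (auto simp: E_def algebra_simps)
    then show ?thesis unfolding X1_def X2_def
      by (simp add: sum_subtractf sum_distrib_left lessThan_atLeast0)
  qed
  have P2: "(\<Sum>t\<in>{p*f..<a}. E t) = int (a - p*f) * (int g * int p) - int g * (X3 - X1)"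
  proof -
    have "(\<Sum>t\<in>{p*f..<a}. E t) = (\<Sum>t\<in>{p*f..<a}. int g * int p - int g * int (t div f))"
      by (intro sum.cong) (auto simp: E_def algebra_simps)
    moreover have "(\<Sum>t\<in>{p*f..<a}. int (t div f)) = X3 - X1"
    proof -
      have "X3 = X1 + (\<Sum>t\<in>{p*f..<a}. int (t div f))"
        unfolding X3_def X1_def using pfa by (simp add: sum.atLeastLessThan_concat lessThan_atLeast0)
      then show ?thesis by simp
    qed
    ultimately show ?thesis
      by (simp add: sum_subtractf sum_distrib_left[symmetric])
  qed
  have ai: "int a = int r * int f + int s" using as by simp
  have af: "int (a - p*f) = int a - int p * int f" using pfa by (simp add: of_nat_diff)
  have "2 * (\<Sum>t<a. E t) = 2 * int p * int f * (int b + int g * int p - int g) - int g * (2*X4 - 2*X3) - int g * (2*X1)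
          + 2 * (int a - int p * int f) * (int g * int p) - int g * (2*X3 - 2*X1)"
    unfolding split P1 P2 e24 af by (simp add: algebra_simps)
  also have "\<dots> = 2*int p*int f*int b - 2*int g*int r*int a + int g*int f*(int r+int p+1)*(int r-int p)"
    unfolding e1 e3 e4 ai by (simp add: algebra_simps)
  finally show ?thesis .
qed

end



context frob begin
lemma main:
  defines "r \<equiv> (a-1) div f"
  shows "2 * int (card {n. num_reps n [a,b,c] \<le> p}) = (int a - 1)*(int b - 1) +
     2*int p*int f*int b - 2*int g*int r*int a + int g*int f*(int r+int p+1)*(int r-int p)"
proof -
  have "int (card {n. num_reps n [a,b,c] \<le> p}) = (\<Sum>t<a. int (nat (E t + int (b*t div a))))"
    by (simp add: card_S)
  also have "\<dots> = (\<Sum>t<a. E t + int (b*t div a))"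
    by (intro sum.cong refl) (simp add: Enonneg)
  also have "\<dots> = (\<Sum>t<a. E t) + (\<Sum>t<a. int (b*t div a))" by (rule sum.distrib)
  finally have "2 * int (card {n. num_reps n [a,b,c] \<le> p}) = 2*(\<Sum>t<a. E t) + 2*(\<Sum>t<a. int (b*t div a))"
    by simp
  then show ?thesis unfolding r_def sum_E sum_div by simp
qed
end

theorem theorem13:
  fixes i k p :: nat
  assumes "i \<ge> 3" and "k \<ge> 3"
    and "r = (fib i - 1) div fib k"
    and "r \<ge> p"
  shows "real (sylvester_p p [fib i, fib (i + 2), fib (i + k)]) =
     ((real (fib i) + 2 * real p * real (fib k) - 1) * real (fib (i + 2)) - real (fib i) + 1) / 2
     - (2 * real r * real (fib i) - (real r + real p + 1) * (real r - real p) * real (fib k))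
       * real (fib (k - 2)) / 2"
proof -
  have kk: "k - 2 + 2 = k" using assms(2) by simp
  have cfb: "fib (i+k) + fib (k-2) * fib i = fib k * fib (i+2)"
  proof -
    have ik: "i + (k-2) + 2 = i + k" using assms(2) by simp
    have "fib (i + (k-2) + 2) + fib (k-2) * fib i = fib (k-2+2) * fib (i+2)" by (rule fib_id)
    then show ?thesis by (simp only: ik kk)
  qed
  have b2a: "2 * fib i \<le> fib (i+2)"
    using fib_plus_2[of i] fib_Suc_mono[of i] by simp
  have f2g: "2 * fib (k-2) \<le> fib k"
  proof -
    have "fib k = fib (k-2+2)" using kk by simp
    also have "\<dots> = fib (k-2+1) + fib (k-2)" by (rule fib_plus_2)
    finally show ?thesis using fib_Suc_mono[of "k-2"] by simp
  qed
  have g1: "1 \<le> fib (k-2)" using fib_neq_0_nat[of "k-2"] assms(2) by simp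
  have a1: "1 \<le> fib i" using fib_neq_0_nat[of i] assms(1) by simp
  have pr: "p \<le> (fib i - 1) div fib k" using assms(3,4) by simp
  interpret F: frob "fib i" "fib (i+2)" "fib (i+k)" "fib k" "fib (k-2)" p
    using cfb b2a f2g g1 a1 fib_coprime[of i] pr by unfold_locales auto
  have M: "2 * int (card {n. num_reps n [fib i, fib (i+2), fib (i+k)] \<le> p}) =
     (int (fib i) - 1)*(int (fib (i+2)) - 1) + 2*int p*int (fib k)*int (fib (i+2))
     - 2*int (fib (k-2))*int r*int (fib i)
     + int (fib (k-2))*int (fib k)*(int r+int p+1)*(int r-int p)"
    using F.main assms(3) by simp
  have M': "2 * real (card {n. num_reps n [fib i, fib (i+2), fib (i+k)] \<le> p}) =
     (real (fib i) - 1)*(real (fib (i+2)) - 1) + 2*real p*real (fib k)*real (fib (i+2))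
     - 2*real (fib (k-2))*real r*real (fib i)
     + real (fib (k-2))*real (fib k)*(real r+real p+1)*(real r-real p)"
  proof -
    have "real_of_int (2 * int (card {n. num_reps n [fib i, fib (i+2), fib (i+k)] \<le> p})) =
      real_of_int ((int (fib i) - 1)*(int (fib (i+2)) - 1) + 2*int p*int (fib k)*int (fib (i+2))
     - 2*int (fib (k-2))*int r*int (fib i)
     + int (fib (k-2))*int (fib k)*(int r+int p+1)*(int r-int p))" using M by simp
    then show ?thesis by simp
  qed
  show ?thesis unfolding sylvester_p_def using M' by (simp add: field_simps)
qed


end
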